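(* Let $L$ be a finite-dimensional Lie superalgebra, let $r,s$ be factor sets on $L$, and put $R=(Z(L),L/Z(L),r)$, $S=(Z(L),L/Z(L),s)$, $Z_R=\{(x,0)\in R\}$, $Z_S=\{(x,0)\in S\}$. (1) Let $\lambda:R\to S$ be a Lie superalgebra isomorphism with $\lambda(Z_R)=Z_S$, and let $\mu\in\mathrm{Aut}(L/Z(L))$, $\nu\in\mathrm{Aut}(Z(L))$ be the automorphisms induced by $\lambda$, i.e. $\lambda(0,\bar a)+Z_S=(0,\mu(\bar a))+Z_S$ and $\lambda(x,0)=(\nu(x),0)$ for all $\bar a\in L/Z(L)$, $x\in Z(L)$. Then there exists an even linear map $\gamma:L/Z(L)\to Z(L)$ such that $\nu\big(r(\bar a,\bar b)+\gamma([\bar a,\bar b])\big)=s(\mu(\bar a),\mu(\bar b))$ for all $\bar a,\bar b\in L/Z(L)$. (2) Conversely, if $\mu\in\mathrm{Aut}(L/Z(L))$, $\nu\in\mathrm{Aut}(Z(L))$ and $\delta:L/Z(L)\to Z(L)$ is an even linear map such that $\nu\big(r(\bar a,\bar b)+\delta([\bar a,\bar b])\big)=s(\mu(\bar a),\mu(\bar b))$ for all $\bar a,\bar b$, then there exists a Lie superalgebra isomorphism $\lambda:R\to S$ induced by $\mu$ and $\nu$ (in the sense of (1)) with $\lambda(Z_R)=Z_S$.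
   Context: Lie superalgebras over a field of characteristic $\neq 2,3$; homomorphisms and "even linear maps" are degree-preserving. $Z(L)$ is the center. A factor set on $L$ is a bilinear map $r:L/Z(L)\times L/Z(L)\to Z(L)$ with, for homogeneous $\bar a,\bar b,\bar c$: $r(\bar a,\bar b)\in Z(L)_{|\bar a|+|\bar b|}$; $r(\bar a,\bar b)=-(-1)^{|\bar a||\bar b|}r(\bar b,\bar a)$; $r([\bar a,\bar b],\bar c)=r(\bar a,[\bar b,\bar c])-(-1)^{|\bar a||\bar b|}r(\bar b,[\bar a,\bar c])$. For a factor set $r$, $(Z(L),L/Z(L),r)$ is the Lie superalgebra of pairs $(x,\bar a)$, $x\in Z(L)$, $\bar a\in L/Z(L)$, graded componentwise, with componentwise addition and bracket $[(x_1,\bar a),(x_2,\bar b)]=(r(\bar a,\bar b),[\bar a,\bar b])$. *)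

theory Defs
  imports Main
begin

text \<open>A (super) vector space / Lie superalgebra over the field 'k, given by a carrier set,
operations, a Z/2-grading (lgr False = even part, lgr True = odd part) and a bracket.\<close>

record ('k, 'a) lsa =
  lcar  :: "'a set"
  lzero :: "'a"
  ladd  :: "'a \<Rightarrow> 'a \<Rightarrow> 'a"
  lsmul :: "'k \<Rightarrow> 'a \<Rightarrow> 'a"
  lgr   :: "bool \<Rightarrow> 'a set"
  lbr   :: "'a \<Rightarrow> 'a \<Rightarrow> 'a"

text \<open>Sign (-1)^(|a||b|) and degree sum |a|+|b| in Z/2 (degrees encoded as bool).\<close>
definition sg :: "bool \<Rightarrow> bool \<Rightarrow> 'k::field" where
  "sg i j = (if i \<and> j then -1 else 1)"

definition dsum :: "bool \<Rightarrow> bool \<Rightarrow> bool" where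
  "dsum i j = (i \<noteq> j)"

definition is_vs :: "('k::field, 'a, 'b) lsa_scheme \<Rightarrow> bool" where
  "is_vs A \<longleftrightarrow>
     lzero A \<in> lcar A \<and>
     (\<forall>x\<in>lcar A. \<forall>y\<in>lcar A. ladd A x y \<in> lcar A) \<and>
     (\<forall>c. \<forall>x\<in>lcar A. lsmul A c x \<in> lcar A) \<and>
     (\<forall>x\<in>lcar A. \<forall>y\<in>lcar A. \<forall>z\<in>lcar A. ladd A (ladd A x y) z = ladd A x (ladd A y z)) \<and>
     (\<forall>x\<in>lcar A. \<forall>y\<in>lcar A. ladd A x y = ladd A y x) \<and>
     (\<forall>x\<in>lcar A. ladd A (lzero A) x = x) \<and>
     (\<forall>x\<in>lcar A. \<exists>y\<in>lcar A. ladd A x y = lzero A) \<and>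
     (\<forall>c. \<forall>x\<in>lcar A. \<forall>y\<in>lcar A. lsmul A c (ladd A x y) = ladd A (lsmul A c x) (lsmul A c y)) \<and>
     (\<forall>c d. \<forall>x\<in>lcar A. lsmul A (c + d) x = ladd A (lsmul A c x) (lsmul A d x)) \<and>
     (\<forall>c d. \<forall>x\<in>lcar A. lsmul A (c * d) x = lsmul A c (lsmul A d x)) \<and>
     (\<forall>x\<in>lcar A. lsmul A 1 x = x)"

definition is_subspace :: "('k::field, 'a, 'b) lsa_scheme \<Rightarrow> 'a set \<Rightarrow> bool" where
  "is_subspace A U \<longleftrightarrow> U \<subseteq> lcar A \<and> lzero A \<in> U \<and>
     (\<forall>x\<in>U. \<forall>y\<in>U. ladd A x y \<in> U) \<and> (\<forall>c. \<forall>x\<in>U. lsmul A c x \<in> U)"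

definition is_lsa :: "('k::field, 'a, 'b) lsa_scheme \<Rightarrow> bool" where
  "is_lsa A \<longleftrightarrow>
     is_vs A \<and>
     (\<forall>i. is_subspace A (lgr A i)) \<and>
     lgr A False \<inter> lgr A True = {lzero A} \<and>
     (\<forall>x\<in>lcar A. \<exists>y\<in>lgr A False. \<exists>z\<in>lgr A True. x = ladd A y z) \<and>
     (\<forall>x\<in>lcar A. \<forall>y\<in>lcar A. lbr A x y \<in> lcar A) \<and>
     (\<forall>x\<in>lcar A. \<forall>y\<in>lcar A. \<forall>z\<in>lcar A. lbr A (ladd A x y) z = ladd A (lbr A x z) (lbr A y z)) \<and>
     (\<forall>x\<in>lcar A. \<forall>y\<in>lcar A. \<forall>z\<in>lcar A. lbr A x (ladd A y z) = ladd A (lbr A x y) (lbr A x z)) \<and>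
     (\<forall>c. \<forall>x\<in>lcar A. \<forall>y\<in>lcar A. lbr A (lsmul A c x) y = lsmul A c (lbr A x y)) \<and>
     (\<forall>c. \<forall>x\<in>lcar A. \<forall>y\<in>lcar A. lbr A x (lsmul A c y) = lsmul A c (lbr A x y)) \<and>
     (\<forall>i j. \<forall>x\<in>lgr A i. \<forall>y\<in>lgr A j. lbr A x y \<in> lgr A (dsum i j)) \<and>
     (\<forall>i j. \<forall>x\<in>lgr A i. \<forall>y\<in>lgr A j. lbr A x y = lsmul A (- sg i j) (lbr A y x)) \<and>
     (\<forall>i j. \<forall>x\<in>lgr A i. \<forall>y\<in>lgr A j. \<forall>z\<in>lcar A.
        lbr A (lbr A x y) z = ladd A (lbr A x (lbr A y z)) (lsmul A (- sg i j) (lbr A y (lbr A x z))))"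

inductive_set lspan :: "('k::field, 'a, 'b) lsa_scheme \<Rightarrow> 'a set \<Rightarrow> 'a set"
  for A :: "('k::field, 'a, 'b) lsa_scheme" and S :: "'a set" where
  lspan_zero: "lzero A \<in> lspan A S"
| lspan_step: "s \<in> S \<Longrightarrow> v \<in> lspan A S \<Longrightarrow> ladd A (lsmul A c s) v \<in> lspan A S"

definition fin_dim :: "('k::field, 'a, 'b) lsa_scheme \<Rightarrow> bool" where
  "fin_dim A \<longleftrightarrow> (\<exists>S. finite S \<and> S \<subseteq> lcar A \<and> lcar A \<subseteq> lspan A S)"

definition even_lin :: "('k::field, 'a, 'b) lsa_scheme \<Rightarrow> ('k, 'c, 'd) lsa_scheme \<Rightarrow> ('a \<Rightarrow> 'c) \<Rightarrow> bool" where
  "even_lin A B f \<longleftrightarrow>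
     (\<forall>x\<in>lcar A. f x \<in> lcar B) \<and>
     (\<forall>x\<in>lcar A. \<forall>y\<in>lcar A. f (ladd A x y) = ladd B (f x) (f y)) \<and>
     (\<forall>c. \<forall>x\<in>lcar A. f (lsmul A c x) = lsmul B c (f x)) \<and>
     (\<forall>i. \<forall>x\<in>lgr A i. f x \<in> lgr B i)"

definition lsa_hom :: "('k::field, 'a, 'b) lsa_scheme \<Rightarrow> ('k, 'c, 'd) lsa_scheme \<Rightarrow> ('a \<Rightarrow> 'c) \<Rightarrow> bool" where
  "lsa_hom A B f \<longleftrightarrow> even_lin A B f \<and>
     (\<forall>x\<in>lcar A. \<forall>y\<in>lcar A. f (lbr A x y) = lbr B (f x) (f y))"

definition lsa_iso :: "('k::field, 'a, 'b) lsa_scheme \<Rightarrow> ('k, 'c, 'd) lsa_scheme \<Rightarrow> ('a \<Rightarrow> 'c) \<Rightarrow> bool" where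
  "lsa_iso A B f \<longleftrightarrow> lsa_hom A B f \<and> bij_betw f (lcar A) (lcar B)"

definition lsa_aut :: "('k::field, 'a, 'b) lsa_scheme \<Rightarrow> ('a \<Rightarrow> 'a) \<Rightarrow> bool" where
  "lsa_aut A f \<longleftrightarrow> lsa_iso A A f"

definition center_set :: "('k::field, 'a, 'b) lsa_scheme \<Rightarrow> 'a set" where
  "center_set L = {z \<in> lcar L. \<forall>a\<in>lcar L. lbr L z a = lzero L}"

definition center :: "('k::field, 'a) lsa \<Rightarrow> ('k, 'a) lsa" where
  "center L = L\<lparr>lcar := center_set L, lgr := (\<lambda>i. lgr L i \<inter> center_set L)\<rparr>"

definition coset :: "('k::field, 'a, 'b) lsa_scheme \<Rightarrow> 'a \<Rightarrow> 'a set \<Rightarrow> 'a set" where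
  "coset A a I = ladd A a ` I"

definition rep :: "'a set \<Rightarrow> 'a" where
  "rep X = (SOME x. x \<in> X)"

definition quot :: "('k::field, 'a) lsa \<Rightarrow> 'a set \<Rightarrow> ('k, 'a set) lsa" where
  "quot L I =
     \<lparr> lcar = (\<lambda>a. coset L a I) ` lcar L,
       lzero = coset L (lzero L) I,
       ladd = (\<lambda>X Y. coset L (ladd L (rep X) (rep Y)) I),
       lsmul = (\<lambda>c X. coset L (lsmul L c (rep X)) I),
       lgr = (\<lambda>i. (\<lambda>a. coset L a I) ` lgr L i),
       lbr = (\<lambda>X Y. coset L (lbr L (rep X) (rep Y)) I) \<rparr>"

definition quotZ :: "('k::field, 'a) lsa \<Rightarrow> ('k, 'a set) lsa" where
  "quotZ L = quot L (center_set L)"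

definition factor_set :: "('k::field, 'a) lsa \<Rightarrow> ('a set \<Rightarrow> 'a set \<Rightarrow> 'a) \<Rightarrow> bool" where
  "factor_set L r \<longleftrightarrow>
    (let Q = quotZ L; Z = center L in
     (\<forall>a\<in>lcar Q. \<forall>b\<in>lcar Q. r a b \<in> lcar Z) \<and>
     (\<forall>a\<in>lcar Q. \<forall>a'\<in>lcar Q. \<forall>b\<in>lcar Q. r (ladd Q a a') b = ladd Z (r a b) (r a' b)) \<and>
     (\<forall>a\<in>lcar Q. \<forall>b\<in>lcar Q. \<forall>b'\<in>lcar Q. r a (ladd Q b b') = ladd Z (r a b) (r a b')) \<and>
     (\<forall>c. \<forall>a\<in>lcar Q. \<forall>b\<in>lcar Q. r (lsmul Q c a) b = lsmul Z c (r a b)) \<and>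
     (\<forall>c. \<forall>a\<in>lcar Q. \<forall>b\<in>lcar Q. r a (lsmul Q c b) = lsmul Z c (r a b)) \<and>
     (\<forall>i j. \<forall>a\<in>lgr Q i. \<forall>b\<in>lgr Q j. r a b \<in> lgr Z (dsum i j)) \<and>
     (\<forall>i j. \<forall>a\<in>lgr Q i. \<forall>b\<in>lgr Q j. r a b = lsmul Z (- sg i j) (r b a)) \<and>
     (\<forall>i j k. \<forall>a\<in>lgr Q i. \<forall>b\<in>lgr Q j. \<forall>c\<in>lgr Q k.
        r (lbr Q a b) c = ladd Z (r a (lbr Q b c)) (lsmul Z (- sg i j) (r b (lbr Q a c)))))"

definition pair_lsa :: "('k::field, 'a) lsa \<Rightarrow> ('a set \<Rightarrow> 'a set \<Rightarrow> 'a) \<Rightarrow> ('k, 'a \<times> 'a set) lsa" where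
  "pair_lsa L r =
    (let Q = quotZ L; Z = center L in
     \<lparr> lcar = lcar Z \<times> lcar Q,
       lzero = (lzero Z, lzero Q),
       ladd = (\<lambda>(x1, a) (x2, b). (ladd Z x1 x2, ladd Q a b)),
       lsmul = (\<lambda>c (x, a). (lsmul Z c x, lsmul Q c a)),
       lgr = (\<lambda>i. lgr Z i \<times> lgr Q i),
       lbr = (\<lambda>(x1, a) (x2, b). (r a b, lbr Q a b)) \<rparr>)"

definition ZR :: "('k::field, 'a) lsa \<Rightarrow> ('a \<times> 'a set) set" where
  "ZR L = {(x, lzero (quotZ L)) | x. x \<in> center_set L}"

end

theory Submission
  imports Defs
begin


locale VS = fixes A :: "('k::field,'a,'b) lsa_scheme" assumes vs: "is_vs A"
begin
lemma zero_in[simp]: "lzero A \<in> lcar A" using vs unfolding is_vs_def by (elim conjE) metis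
lemma add_in[simp]: "x \<in> lcar A \<Longrightarrow> y \<in> lcar A \<Longrightarrow> ladd A x y \<in> lcar A" using vs unfolding is_vs_def by (elim conjE) metis
lemma smul_in[simp]: "x \<in> lcar A \<Longrightarrow> lsmul A c x \<in> lcar A" using vs unfolding is_vs_def by (elim conjE) metis
lemma assoc: "x \<in> lcar A \<Longrightarrow> y \<in> lcar A \<Longrightarrow> z \<in> lcar A \<Longrightarrow> ladd A (ladd A x y) z = ladd A x (ladd A y z)" using vs unfolding is_vs_def by (elim conjE) metis
lemma comm: "x \<in> lcar A \<Longrightarrow> y \<in> lcar A \<Longrightarrow> ladd A x y = ladd A y x" using vs unfolding is_vs_def by (elim conjE) metis
lemma zero_add[simp]: "x \<in> lcar A \<Longrightarrow> ladd A (lzero A) x = x" using vs unfolding is_vs_def by (elim conjE) metis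
lemma ex_inv: "x \<in> lcar A \<Longrightarrow> \<exists>y\<in>lcar A. ladd A x y = lzero A" using vs unfolding is_vs_def by (elim conjE) metis
lemma smul_add: "x \<in> lcar A \<Longrightarrow> y \<in> lcar A \<Longrightarrow> lsmul A c (ladd A x y) = ladd A (lsmul A c x) (lsmul A c y)" using vs unfolding is_vs_def by (elim conjE) metis
lemma add_smul: "x \<in> lcar A \<Longrightarrow> lsmul A (c + d) x = ladd A (lsmul A c x) (lsmul A d x)" using vs unfolding is_vs_def by (elim conjE) metis
lemma smul_smul: "x \<in> lcar A \<Longrightarrow> lsmul A (c * d) x = lsmul A c (lsmul A d x)" using vs unfolding is_vs_def by (elim conjE) metis
lemma smul_one[simp]: "x \<in> lcar A \<Longrightarrow> lsmul A 1 x = x" using vs unfolding is_vs_def by (elim conjE) metis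
lemma add_zero[simp]: "x \<in> lcar A \<Longrightarrow> ladd A x (lzero A) = x" using comm zero_add zero_in by metis

lemma cancel_left: assumes "x \<in> lcar A" "y \<in> lcar A" "z \<in> lcar A" "ladd A x y = ladd A x z" shows "y = z"
proof -
  obtain x' where x': "x' \<in> lcar A" "ladd A x x' = lzero A" using ex_inv assms(1) by blast
  have "y = ladd A (ladd A x' x) y" using x' assms comm by simp
  also have "\<dots> = ladd A x' (ladd A x z)" using assoc x' assms by simp
  also have "\<dots> = ladd A (ladd A x' x) z" using assoc x' assms by simp
  also have "\<dots> = z" using x' assms comm by simp
  finally show ?thesis .
qed
lemma cancel_right: assumes "x \<in> lcar A" "y \<in> lcar A" "z \<in> lcar A" "ladd A y x = ladd A z x" shows "y = z"
  using cancel_left[OF assms(1-3)] assms comm by metis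
lemma smul_zero_left[simp]: assumes "x \<in> lcar A" shows "lsmul A 0 x = lzero A"
proof -
  have "ladd A (lsmul A 0 x) (lsmul A 0 x) = ladd A (lsmul A 0 x) (lzero A)"
    using add_smul[OF assms, of 0 0] assms by simp
  thus ?thesis using cancel_left assms by (meson smul_in zero_in)
qed
lemma smul_zero_right[simp]: "lsmul A c (lzero A) = lzero A"
proof -
  have "ladd A (lsmul A c (lzero A)) (lsmul A c (lzero A)) = ladd A (lsmul A c (lzero A)) (lzero A)"
    using smul_add[of "lzero A" "lzero A" c] by simp
  thus ?thesis using cancel_left by (meson smul_in zero_in)
qed
lemma neg: assumes "x \<in> lcar A" shows "ladd A x (lsmul A (-1) x) = lzero A"
proof -
  have "ladd A (lsmul A 1 x) (lsmul A (-1) x) = lsmul A (1 + -1) x" using add_smul[OF assms, of 1 "-1"] by simp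
  also have "\<dots> = lzero A" using assms by simp
  finally show ?thesis using assms by simp
qed
lemma add_swap: assumes "a \<in> lcar A" "b \<in> lcar A" "c \<in> lcar A" "d \<in> lcar A"
  shows "ladd A (ladd A a b) (ladd A c d) = ladd A (ladd A a c) (ladd A b d)"
proof -
  have "ladd A (ladd A a b) (ladd A c d) = ladd A a (ladd A b (ladd A c d))" using assms assoc by simp
  also have "ladd A b (ladd A c d) = ladd A c (ladd A b d)" using assms assoc comm by metis
  also have "ladd A a (ladd A c (ladd A b d)) = ladd A (ladd A a c) (ladd A b d)" using assms assoc by simp
  finally show ?thesis .
qed
lemma neg': assumes "x \<in> lcar A" shows "ladd A (lsmul A (-1) x) x = lzero A"
  using neg assms comm by (metis smul_in)
lemma sub_eq: assumes "u \<in> lcar A" "v \<in> lcar A" shows "v = ladd A (ladd A u v) (lsmul A (-1) u)"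
proof -
  have "ladd A (ladd A u v) (lsmul A (-1) u) = ladd A v (ladd A u (lsmul A (-1) u))"
    using assms assoc comm by (metis smul_in)
  thus ?thesis using neg assms by simp
qed
end

lemma lin_add: "even_lin A B f \<Longrightarrow> x \<in> lcar A \<Longrightarrow> y \<in> lcar A \<Longrightarrow> f (ladd A x y) = ladd B (f x) (f y)"
  unfolding even_lin_def by blast
lemma lin_smul: "even_lin A B f \<Longrightarrow> x \<in> lcar A \<Longrightarrow> f (lsmul A c x) = lsmul B c (f x)"
  unfolding even_lin_def by blast
lemma lin_in: "even_lin A B f \<Longrightarrow> x \<in> lcar A \<Longrightarrow> f x \<in> lcar B"
  unfolding even_lin_def by blast
lemma lin_gr: "even_lin A B f \<Longrightarrow> x \<in> lgr A i \<Longrightarrow> f x \<in> lgr B i"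
  unfolding even_lin_def by blast

lemma lin_zero: assumes "even_lin A B f" "lzero A \<in> lcar A" "lsmul A 0 (lzero A) = lzero A"
  "lsmul B 0 (f (lzero A)) = lzero B" shows "f (lzero A) = lzero B"
  using lin_smul[OF assms(1,2), of 0] assms(3,4) by simp

lemma center_simps[simp]: "lcar (center L) = center_set L" "lzero (center L) = lzero L"
  "ladd (center L) = ladd L" "lsmul (center L) = lsmul L" "lgr (center L) i = lgr L i \<inter> center_set L"
  "lbr (center L) = lbr L"
  by (simp_all add: center_def)

lemma quotZ_simps[simp]: "lcar (quotZ L) = (\<lambda>a. coset L a (center_set L)) ` lcar L"
  "lzero (quotZ L) = coset L (lzero L) (center_set L)"
  "ladd (quotZ L) X Y = coset L (ladd L (rep X) (rep Y)) (center_set L)"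
  "lsmul (quotZ L) c X = coset L (lsmul L c (rep X)) (center_set L)"
  "lgr (quotZ L) i = (\<lambda>a. coset L a (center_set L)) ` lgr L i"
  "lbr (quotZ L) X Y = coset L (lbr L (rep X) (rep Y)) (center_set L)"
  by (simp_all add: quotZ_def quot_def)

lemma pair_simps[simp]: "lcar (pair_lsa L r) = center_set L \<times> lcar (quotZ L)"
  "lzero (pair_lsa L r) = (lzero L, lzero (quotZ L))"
  "ladd (pair_lsa L r) (x1, a) (x2, b) = (ladd L x1 x2, ladd (quotZ L) a b)"
  "lsmul (pair_lsa L r) c (x, a) = (lsmul L c x, lsmul (quotZ L) c a)"
  "lgr (pair_lsa L r) i = (lgr L i \<inter> center_set L) \<times> lgr (quotZ L) i"
  "lbr (pair_lsa L r) (x1, a) (x2, b) = (r a b, lbr (quotZ L) a b)"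
  by (simp_all add: pair_lsa_def Let_def del: quotZ_simps)

locale LSA = fixes L :: "('k::field,'a) lsa" assumes lsa: "is_lsa L"
begin
sublocale VS L using lsa unfolding is_lsa_def by unfold_locales simp

lemma subsp: "is_subspace L (lgr L i)" using lsa unfolding is_lsa_def by (elim conjE) metis
lemma gr_sub: "x \<in> lgr L i \<Longrightarrow> x \<in> lcar L" using subsp unfolding is_subspace_def by blast
lemma gr_zero[simp]: "lzero L \<in> lgr L i" using subsp unfolding is_subspace_def by blast
lemma gr_add: "x \<in> lgr L i \<Longrightarrow> y \<in> lgr L i \<Longrightarrow> ladd L x y \<in> lgr L i" using subsp unfolding is_subspace_def by blast
lemma gr_smul: "x \<in> lgr L i \<Longrightarrow> lsmul L c x \<in> lgr L i" using subsp unfolding is_subspace_def by blast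
lemma gr_int: "lgr L False \<inter> lgr L True = {lzero L}" using lsa unfolding is_lsa_def by (elim conjE) metis
lemma decomp: "x \<in> lcar L \<Longrightarrow> \<exists>y\<in>lgr L False. \<exists>z\<in>lgr L True. x = ladd L y z" using lsa unfolding is_lsa_def by (elim conjE) metis
lemma br_in[simp]: "x \<in> lcar L \<Longrightarrow> y \<in> lcar L \<Longrightarrow> lbr L x y \<in> lcar L" using lsa unfolding is_lsa_def by (elim conjE) metis
lemma br_add_l: "x \<in> lcar L \<Longrightarrow> y \<in> lcar L \<Longrightarrow> z \<in> lcar L \<Longrightarrow> lbr L (ladd L x y) z = ladd L (lbr L x z) (lbr L y z)" using lsa unfolding is_lsa_def by (elim conjE) metis
lemma br_add_r: "x \<in> lcar L \<Longrightarrow> y \<in> lcar L \<Longrightarrow> z \<in> lcar L \<Longrightarrow> lbr L x (ladd L y z) = ladd L (lbr L x y) (lbr L x z)" using lsa unfolding is_lsa_def by (elim conjE) metis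
lemma br_smul_l: "x \<in> lcar L \<Longrightarrow> y \<in> lcar L \<Longrightarrow> lbr L (lsmul L c x) y = lsmul L c (lbr L x y)" using lsa unfolding is_lsa_def by (elim conjE) metis
lemma br_gr: "x \<in> lgr L i \<Longrightarrow> y \<in> lgr L j \<Longrightarrow> lbr L x y \<in> lgr L (dsum i j)" using lsa unfolding is_lsa_def by (elim conjE) metis

lemma gr_disj: "u \<in> lgr L i \<Longrightarrow> u \<in> lgr L (\<not> i) \<Longrightarrow> u = lzero L"
  using gr_int by (cases i) auto

lemma gr_sum_zero: assumes "u \<in> lgr L i" "v \<in> lgr L (\<not> i)" "ladd L u v = lzero L" shows "u = lzero L"
proof -
  have "u = ladd L (ladd L v u) (lsmul L (-1) v)" using sub_eq[of v u] assms gr_sub by blast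
  also have "\<dots> = lsmul L (-1) v" using assms comm gr_sub by (metis smul_in zero_add)
  finally have "u \<in> lgr L (\<not> i)" using gr_smul assms by metis
  thus ?thesis using gr_disj assms by blast
qed

abbreviation "Z \<equiv> center_set L"

lemma Z_iff: "z \<in> Z \<longleftrightarrow> z \<in> lcar L \<and> (\<forall>a\<in>lcar L. lbr L z a = lzero L)"
  unfolding center_set_def by blast
lemma Z_car: "z \<in> Z \<Longrightarrow> z \<in> lcar L" using Z_iff by blast
lemma br_zero_l[simp]: "a \<in> lcar L \<Longrightarrow> lbr L (lzero L) a = lzero L"
  using br_smul_l[of "lzero L" a 0] by simp
lemma Z_zero[simp]: "lzero L \<in> Z" using Z_iff by simp
lemma Z_add: "x \<in> Z \<Longrightarrow> y \<in> Z \<Longrightarrow> ladd L x y \<in> Z" using Z_iff br_add_l by simp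
lemma Z_smul: "x \<in> Z \<Longrightarrow> lsmul L c x \<in> Z" using Z_iff br_smul_l by simp
lemma Z_shift: assumes "t \<in> Z" shows "ladd L t ` Z = Z"
proof
  show "ladd L t ` Z \<subseteq> Z" using Z_add assms by blast
  show "Z \<subseteq> ladd L t ` Z"
  proof
    fix w assume w: "w \<in> Z"
    have "w = ladd L t (ladd L (lsmul L (-1) t) w)"
      using assoc[of t "lsmul L (-1) t" w] neg[of t] assms w Z_car by simp
    thus "w \<in> ladd L t ` Z" using Z_add Z_smul assms w by blast
  qed
qed

lemma center_graded: assumes x: "x \<in> Z" and y: "y \<in> lgr L False" and z: "z \<in> lgr L True"
  and xyz: "x = ladd L y z" shows "y \<in> Z \<and> z \<in> Z"
proof -
  have yc: "y \<in> lcar L" and zc: "z \<in> lcar L" using y z gr_sub by auto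
  have key: "lbr L y b = lzero L \<and> lbr L z b = lzero L" if b: "b \<in> lgr L j" for b j
  proof -
    have bc: "b \<in> lcar L" using b gr_sub by auto
    have s: "ladd L (lbr L y b) (lbr L z b) = lzero L"
      using br_add_l[OF yc zc bc] x xyz bc Z_iff by simp
    have g1: "lbr L y b \<in> lgr L j" using br_gr[OF y b] by (simp add: dsum_def)
    have g2: "lbr L z b \<in> lgr L (\<not> j)" using br_gr[OF z b] by (simp add: dsum_def)
    have 1: "lbr L y b = lzero L" using gr_sum_zero[OF g1 g2 s] .
    have s': "ladd L (lbr L z b) (lbr L y b) = lzero L" using s comm yc zc bc by simp
    have 2: "lbr L z b = lzero L" using gr_sum_zero[OF g2 _ s'] g1 by simp
    show ?thesis using 1 2 by simp
  qed
  have "lbr L y a = lzero L \<and> lbr L z a = lzero L" if a: "a \<in> lcar L" for a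
  proof -
    obtain a0 a1 where a0: "a0 \<in> lgr L False" and a1: "a1 \<in> lgr L True" and aa: "a = ladd L a0 a1"
      using decomp a by blast
    have c0: "a0 \<in> lcar L" "a1 \<in> lcar L" using a0 a1 gr_sub by auto
    show ?thesis using br_add_r[OF yc c0] br_add_r[OF zc c0] key[OF a0] key[OF a1] aa by simp
  qed
  thus ?thesis using Z_iff yc zc by blast
qed

abbreviation "Q \<equiv> quotZ L"

lemma coset_mem: "a \<in> lcar L \<Longrightarrow> a \<in> coset L a Z"
  unfolding coset_def using Z_zero add_zero by (metis image_eqI)
lemma coset_sub: "a \<in> lcar L \<Longrightarrow> coset L a Z \<subseteq> lcar L"
  unfolding coset_def using Z_car by auto
lemma rep_mem: assumes "X \<in> lcar Q" shows "rep X \<in> X" "rep X \<in> lcar L"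
proof -
  obtain a where a: "a \<in> lcar L" "X = coset L a Z" using assms by auto
  show "rep X \<in> X" unfolding rep_def using coset_mem a by (metis someI)
  thus "rep X \<in> lcar L" using coset_sub a by blast
qed
lemma zeroQ: "lzero Q = Z" using Z_shift[of "lzero L"] by (simp add: coset_def)
lemma zeroQ_in[simp]: "lzero Q \<in> lcar Q" by auto
lemma coset_shift: assumes "a \<in> lcar L" "w \<in> Z" shows "coset L (ladd L a w) Z = coset L a Z"
proof -
  have "coset L (ladd L a w) Z = ladd L a ` (ladd L w ` Z)"
    unfolding coset_def using assoc assms Z_car by (auto simp: image_iff)
  thus ?thesis using Z_shift assms by (simp add: coset_def)
qed
lemma addQ_zero: assumes X: "X \<in> lcar Q" shows "ladd Q X (lzero Q) = X"
proof -
  obtain a where a: "a \<in> lcar L" "X = coset L a Z" using X by auto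
  from rep_mem(1)[OF X] a obtain z0 where z0: "z0 \<in> Z" "rep X = ladd L a z0" by (auto simp: coset_def)
  have z1: "rep (lzero Q) \<in> Z" using rep_mem(1)[OF zeroQ_in] zeroQ by simp
  have "ladd Q X (lzero Q) = coset L (ladd L a (ladd L z0 (rep (lzero Q)))) Z"
    using z0 z1 a assoc Z_car by simp
  also have "\<dots> = X" using coset_shift a z0 z1 Z_add by simp
  finally show ?thesis .
qed
lemma addQ_comm: "ladd Q X Y = ladd Q Y X" if "X \<in> lcar Q" "Y \<in> lcar Q"
  using comm rep_mem that by simp
lemma zero_addQ: "X \<in> lcar Q \<Longrightarrow> ladd Q (lzero Q) X = X" using addQ_comm addQ_zero zeroQ_in by metis
lemma brQ_in: "X \<in> lcar Q \<Longrightarrow> Y \<in> lcar Q \<Longrightarrow> lbr Q X Y \<in> lcar Q" using rep_mem by simp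
lemma smulQ_zero: "lsmul Q 0 (lzero Q) = lzero Q" using rep_mem[OF zeroQ_in] by simp

end

context LSA begin

lemma inv_facts:
  assumes \<nu>l: "even_lin (center L) (center L) \<nu>" and \<nu>b: "bij_betw \<nu> Z Z"
  shows "\<And>y. y \<in> Z \<Longrightarrow> inv_into Z \<nu> y \<in> Z"
    and "\<And>y. y \<in> Z \<Longrightarrow> \<nu> (inv_into Z \<nu> y) = y"
    and "\<And>u v. u \<in> Z \<Longrightarrow> v \<in> Z \<Longrightarrow> inv_into Z \<nu> (ladd L u v) = ladd L (inv_into Z \<nu> u) (inv_into Z \<nu> v)"
    and "\<And>u c. u \<in> Z \<Longrightarrow> inv_into Z \<nu> (lsmul L c u) = lsmul L c (inv_into Z \<nu> u)"
    and "\<And>y i. y \<in> Z \<Longrightarrow> y \<in> lgr L i \<Longrightarrow> inv_into Z \<nu> y \<in> lgr L i"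
proof -
  have im: "\<nu> ` Z = Z" using bij_betw_imp_surj_on[OF \<nu>b] .
  have inj: "inj_on \<nu> Z" using bij_betw_imp_inj_on[OF \<nu>b] .
  have \<nu>Z: "x \<in> Z \<Longrightarrow> \<nu> x \<in> Z" for x using lin_in[OF \<nu>l] by simp
  show iZ: "\<And>y. y \<in> Z \<Longrightarrow> inv_into Z \<nu> y \<in> Z" using inv_into_into im by metis
  show fi: "\<And>y. y \<in> Z \<Longrightarrow> \<nu> (inv_into Z \<nu> y) = y" using f_inv_into_f im by metis
  show "inv_into Z \<nu> (ladd L u v) = ladd L (inv_into Z \<nu> u) (inv_into Z \<nu> v)" if "u \<in> Z" "v \<in> Z" for u v
  proof (rule inj_onD[OF inj])
    show "\<nu> (inv_into Z \<nu> (ladd L u v)) = \<nu> (ladd L (inv_into Z \<nu> u) (inv_into Z \<nu> v))"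
      using fi iZ that Z_add lin_add[OF \<nu>l] by simp
    show "inv_into Z \<nu> (ladd L u v) \<in> Z" using iZ Z_add that by blast
    show "ladd L (inv_into Z \<nu> u) (inv_into Z \<nu> v) \<in> Z" using iZ Z_add that by blast
  qed
  show "inv_into Z \<nu> (lsmul L c u) = lsmul L c (inv_into Z \<nu> u)" if "u \<in> Z" for u c
  proof (rule inj_onD[OF inj])
    show "\<nu> (inv_into Z \<nu> (lsmul L c u)) = \<nu> (lsmul L c (inv_into Z \<nu> u))"
      using fi iZ that Z_smul lin_smul[OF \<nu>l] by simp
    show "inv_into Z \<nu> (lsmul L c u) \<in> Z" using iZ Z_smul that by blast
    show "lsmul L c (inv_into Z \<nu> u) \<in> Z" using iZ Z_smul that by blast
  qed
  show "inv_into Z \<nu> y \<in> lgr L i" if y: "y \<in> Z" "y \<in> lgr L i" for y i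
  proof -
    define x where "x = inv_into Z \<nu> y"
    have xZ: "x \<in> Z" and nx: "\<nu> x = y" using iZ fi y x_def by auto
    obtain x0 x1 where x0: "x0 \<in> lgr L False" and x1: "x1 \<in> lgr L True" and xx: "x = ladd L x0 x1"
      using decomp xZ Z_car by blast
    have x01: "x0 \<in> Z" "x1 \<in> Z" using center_graded[OF xZ x0 x1 xx] by auto
    have ys: "y = ladd L (\<nu> x0) (\<nu> x1)" using nx xx lin_add[OF \<nu>l] x01 by simp
    have g0: "\<nu> x0 \<in> lgr L False" "\<nu> x0 \<in> Z" using lin_gr[OF \<nu>l, of x0 False] x0 x01 by auto
    have g1: "\<nu> x1 \<in> lgr L True" "\<nu> x1 \<in> Z" using lin_gr[OF \<nu>l, of x1 True] x1 x01 by auto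
    have c0: "\<nu> x0 \<in> lcar L" "\<nu> x1 \<in> lcar L" using g0 g1 Z_car by auto
    have \<nu>0: "\<nu> (lzero L) = lzero L" using lin_zero[OF \<nu>l] \<nu>Z Z_car by simp
    show ?thesis
    proof (cases i)
      case False
      have "\<nu> x1 = ladd L y (lsmul L (-1) (\<nu> x0))" using sub_eq[OF c0] ys by simp
      hence "\<nu> x1 \<in> lgr L False" using y False gr_add gr_smul g0 by simp
      hence "\<nu> x1 = lzero L" using gr_int g1 by blast
      hence "x1 = lzero L" using inj_onD[OF inj, of x1 "lzero L"] \<nu>0 x01 by simp
      hence "x = x0" using xx x0 gr_sub by simp
      thus ?thesis using x0 False x_def by simp
    next
      case True
      have "\<nu> x0 = ladd L (ladd L (\<nu> x1) (\<nu> x0)) (lsmul L (-1) (\<nu> x1))" using sub_eq c0 by simp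
      also have "ladd L (\<nu> x1) (\<nu> x0) = y" using ys comm c0 by simp
      finally have "\<nu> x0 \<in> lgr L True" using y True gr_add gr_smul g1 by simp
      hence "\<nu> x0 = lzero L" using gr_int g0 by blast
      hence "x0 = lzero L" using inj_onD[OF inj, of x0 "lzero L"] \<nu>0 x01 by simp
      hence "x = x1" using xx x1 gr_sub by simp
      thus ?thesis using x1 True x_def by simp
    qed
  qed
qed

end

context LSA begin

lemma part2:
  assumes r: "factor_set L r"
    and \<mu>: "lsa_aut Q \<mu>" and \<nu>: "lsa_aut (center L) \<nu>" and \<delta>: "even_lin Q (center L) \<delta>"
    and eq: "\<forall>a\<in>lcar Q. \<forall>b\<in>lcar Q. \<nu> (ladd L (r a b) (\<delta> (lbr Q a b))) = s (\<mu> a) (\<mu> b)"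
  shows "\<exists>lam. lsa_iso (pair_lsa L r) (pair_lsa L s) lam \<and>
            lam ` ZR L = ZR L \<and>
            (\<forall>a\<in>lcar Q.
               coset (pair_lsa L s) (lam (lzero L, a)) (ZR L)
                 = coset (pair_lsa L s) (lzero L, \<mu> a) (ZR L)) \<and>
            (\<forall>x\<in>Z. lam (x, lzero Q) = (\<nu> x, lzero Q))"
proof -
  have rZ: "r a b \<in> Z" if "a \<in> lcar Q" "b \<in> lcar Q" for a b
    using r that unfolding factor_set_def Let_def by (simp del: quotZ_simps)
  have \<mu>l: "even_lin Q Q \<mu>" and \<mu>b: "bij_betw \<mu> (lcar Q) (lcar Q)"
    and \<mu>br: "\<forall>x\<in>lcar Q. \<forall>y\<in>lcar Q. \<mu> (lbr Q x y) = lbr Q (\<mu> x) (\<mu> y)"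
    using \<mu> unfolding lsa_aut_def lsa_iso_def lsa_hom_def by blast+
  have \<nu>l: "even_lin (center L) (center L) \<nu>" and \<nu>b: "bij_betw \<nu> Z Z"
    using \<nu> unfolding lsa_aut_def lsa_iso_def lsa_hom_def by auto
  have \<nu>Z: "x \<in> Z \<Longrightarrow> \<nu> x \<in> Z" for x using lin_in[OF \<nu>l] by simp
  have \<delta>Z: "a \<in> lcar Q \<Longrightarrow> \<delta> a \<in> Z" for a using lin_in[OF \<delta>] by simp
  have \<mu>Q: "a \<in> lcar Q \<Longrightarrow> \<mu> a \<in> lcar Q" for a using lin_in[OF \<mu>l] by simp
  have \<nu>0: "\<nu> (lzero L) = lzero L" using lin_zero[OF \<nu>l] \<nu>Z Z_car by simp
  have \<delta>0: "\<delta> (lzero Q) = lzero L" using lin_zero[OF \<delta>] \<delta>Z Z_car smulQ_zero by simp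
  have \<mu>0: "\<mu> (lzero Q) = lzero Q"
    using lin_zero[OF \<mu>l] \<mu>Q rep_mem zeroQ_in by (simp only: quotZ_simps) (metis quotZ_simps(2) smul_zero_left zeroQ_in)
  define lam where "lam = (\<lambda>(x, a). (ladd L (\<nu> x) (\<nu> (\<delta> a)), \<mu> a))"
  have lam_in: "lam p \<in> Z \<times> lcar Q" if "p \<in> Z \<times> lcar Q" for p
    using that \<nu>Z \<delta>Z \<mu>Q Z_add unfolding lam_def by auto
  have hom: "lsa_hom (pair_lsa L r) (pair_lsa L s) lam"
    unfolding lsa_hom_def even_lin_def
  proof (intro conjI ballI allI)
    fix p assume "p \<in> lcar (pair_lsa L r)" thus "lam p \<in> lcar (pair_lsa L s)" using lam_in by simp
  next
    fix p q assume p: "p \<in> lcar (pair_lsa L r)" and q: "q \<in> lcar (pair_lsa L r)"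
    obtain x1 a where pp: "p = (x1, a)" "x1 \<in> Z" "a \<in> lcar Q" using p by auto
    obtain x2 b where qq: "q = (x2, b)" "x2 \<in> Z" "b \<in> lcar Q" using q by auto
    have abQ: "ladd Q a b \<in> lcar Q" using pp qq rep_mem by simp
    have 1: "\<nu> (ladd L x1 x2) = ladd L (\<nu> x1) (\<nu> x2)" using lin_add[OF \<nu>l] pp qq by simp
    have 2: "\<nu> (\<delta> (ladd Q a b)) = ladd L (\<nu> (\<delta> a)) (\<nu> (\<delta> b))"
      using lin_add[OF \<delta>, of a b] lin_add[OF \<nu>l, of "\<delta> a" "\<delta> b"] pp qq \<delta>Z by simp
    have 3: "\<mu> (ladd Q a b) = ladd Q (\<mu> a) (\<mu> b)" using lin_add[OF \<mu>l] pp qq by simp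
    show "lam (ladd (pair_lsa L r) p q) = ladd (pair_lsa L s) (lam p) (lam q)"
      using pp qq 1 2 3 add_swap[of "\<nu> x1" "\<nu> x2" "\<nu> (\<delta> a)" "\<nu> (\<delta> b)"] \<nu>Z \<delta>Z Z_car
      unfolding lam_def by simp
    show "lam (lbr (pair_lsa L r) p q) = lbr (pair_lsa L s) (lam p) (lam q)"
    proof -
      have bQ: "lbr Q a b \<in> lcar Q" using brQ_in pp qq by blast
      have "ladd L (\<nu> (r a b)) (\<nu> (\<delta> (lbr Q a b))) = \<nu> (ladd L (r a b) (\<delta> (lbr Q a b)))"
        using lin_add[OF \<nu>l, of "r a b" "\<delta> (lbr Q a b)"] rZ pp qq \<delta>Z bQ by simp
      also have "\<dots> = s (\<mu> a) (\<mu> b)" using eq pp qq by blast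
      moreover have m: "\<mu> (lbr Q a b) = lbr Q (\<mu> a) (\<mu> b)" using \<mu>br pp qq by blast
      ultimately show ?thesis using pp qq unfolding lam_def by (simp del: quotZ_simps)
    qed
  next
    fix c p assume p: "p \<in> lcar (pair_lsa L r)"
    obtain x a where pp: "p = (x, a)" "x \<in> Z" "a \<in> lcar Q" using p by auto
    have "lsmul Q c a \<in> lcar Q" using pp rep_mem by simp
    show "lam (lsmul (pair_lsa L r) c p) = lsmul (pair_lsa L s) c (lam p)"
      using pp lin_smul[OF \<nu>l] lin_smul[OF \<delta>] lin_smul[OF \<mu>l] \<delta>Z \<nu>Z Z_car smul_add
      unfolding lam_def by simp
  next
    fix i p assume p: "p \<in> lgr (pair_lsa L r) i"
    obtain x a where pp: "p = (x, a)" "x \<in> lgr L i \<inter> Z" "a \<in> lgr Q i" using p by auto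
    have 1: "\<nu> x \<in> lgr L i \<inter> Z" using lin_gr[OF \<nu>l, of x i] pp by simp
    have 2: "\<delta> a \<in> lgr L i \<inter> Z" using lin_gr[OF \<delta>, of a i] pp by simp
    have 3: "\<nu> (\<delta> a) \<in> lgr L i \<inter> Z" using lin_gr[OF \<nu>l, of "\<delta> a" i] 2 by simp
    have 4: "\<mu> a \<in> lgr Q i" using lin_gr[OF \<mu>l, of a i] pp by simp
    show "lam p \<in> lgr (pair_lsa L s) i" using 1 3 4 pp gr_add Z_add unfolding lam_def by auto
  qed
  have inj: "inj_on lam (Z \<times> lcar Q)"
  proof (rule inj_onI)
    fix p q assume p: "p \<in> Z \<times> lcar Q" and q: "q \<in> Z \<times> lcar Q" and e: "lam p = lam q"
    obtain x1 a where pp: "p = (x1, a)" "x1 \<in> Z" "a \<in> lcar Q" using p by auto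
    obtain x2 b where qq: "q = (x2, b)" "x2 \<in> Z" "b \<in> lcar Q" using q by auto
    have "\<mu> a = \<mu> b" using e pp qq unfolding lam_def by simp
    hence ab: "a = b" using inj_onD[OF bij_betw_imp_inj_on[OF \<mu>b]] pp(3) qq(3) by blast
    have "ladd L (\<nu> x1) (\<nu> (\<delta> a)) = ladd L (\<nu> x2) (\<nu> (\<delta> a))" using e pp qq ab unfolding lam_def by simp
    moreover have "\<nu> (\<delta> a) \<in> lcar L" "\<nu> x1 \<in> lcar L" "\<nu> x2 \<in> lcar L"
      using \<nu>Z \<delta>Z Z_car pp qq by auto
    ultimately have "\<nu> x1 = \<nu> x2" using cancel_right by blast
    hence "x1 = x2" using inj_onD[OF bij_betw_imp_inj_on[OF \<nu>b]] pp(2) qq(2) by blast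
    thus "p = q" using pp qq ab by simp
  qed
  have surj: "lam ` (Z \<times> lcar Q) = Z \<times> lcar Q"
  proof
    show "lam ` (Z \<times> lcar Q) \<subseteq> Z \<times> lcar Q" using lam_in by blast
    show "Z \<times> lcar Q \<subseteq> lam ` (Z \<times> lcar Q)"
    proof
      fix p assume "p \<in> Z \<times> lcar Q"
      then obtain y b where pp: "p = (y, b)" "y \<in> Z" "b \<in> lcar Q" by auto
      have "b \<in> \<mu> ` lcar Q" using bij_betw_imp_surj_on[OF \<mu>b] pp(3) by (simp only:)
      then obtain a where a: "a \<in> lcar Q" "b = \<mu> a" by (rule imageE) blast
      define w where "w = ladd L y (lsmul L (-1) (\<nu> (\<delta> a)))"
      have wZ: "w \<in> Z" unfolding w_def using Z_add Z_smul pp \<nu>Z \<delta>Z a by blast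
      have "w \<in> \<nu> ` Z" using bij_betw_imp_surj_on[OF \<nu>b] wZ by (simp only:)
      then obtain x where x: "x \<in> Z" "\<nu> x = w" by (rule imageE) blast
      have u: "\<nu> (\<delta> a) \<in> lcar L" using \<nu>Z \<delta>Z a Z_car by blast
      have "ladd L w (\<nu> (\<delta> a)) = y" unfolding w_def
        using assoc[of y "lsmul L (-1) (\<nu> (\<delta> a))" "\<nu> (\<delta> a)"] neg'[OF u] u pp Z_car by simp
      hence "lam (x, a) = p" using x a pp unfolding lam_def by simp
      moreover have "(x, a) \<in> Z \<times> lcar Q" using x a by simp
      ultimately show "p \<in> lam ` (Z \<times> lcar Q)" by (metis imageI)
    qed
  qed
  have iso: "lsa_iso (pair_lsa L r) (pair_lsa L s) lam"
    unfolding lsa_iso_def bij_betw_def using hom inj surj by simp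
  have lamZ: "lam (x, lzero Q) = (\<nu> x, lzero Q)" if "x \<in> Z" for x
    using that \<delta>0 \<nu>0 \<mu>0 \<nu>Z Z_car unfolding lam_def by simp
  have ZR: "lam ` ZR L = ZR L"
  proof -
    have e: "ZR L = (\<lambda>x. (x, lzero Q)) ` Z" unfolding ZR_def by (rule Setcompr_eq_image)
    have 1: "lam ` ZR L = (\<lambda>x. (\<nu> x, lzero Q)) ` Z" unfolding e image_image
      by (rule image_cong[OF refl lamZ])
    have 2: "(\<lambda>x. (\<nu> x, lzero Q)) ` Z = (\<lambda>x. (x, lzero Q)) ` (\<nu> ` Z)" by (simp only: image_image)
    have 3: "\<nu> ` Z = Z" using \<nu>b by (simp add: bij_betw_def)
    show ?thesis by (simp only: 1 2 3 e[symmetric])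
  qed
  have cos: "coset (pair_lsa L s) (lam (lzero L, a)) (ZR L) = coset (pair_lsa L s) (lzero L, \<mu> a) (ZR L)"
    if a: "a \<in> lcar Q" for a
  proof -
    have t: "\<nu> (\<delta> a) \<in> Z" using \<nu>Z \<delta>Z a by blast
    have l0: "lam (lzero L, a) = (\<nu> (\<delta> a), \<mu> a)" using \<nu>0 t Z_car unfolding lam_def by simp
    have gen: "coset (pair_lsa L s) (t', m) (ZR L) = (\<lambda>x. (x, ladd Q m (lzero Q))) ` (ladd L t' ` Z)" for t' m
    proof -
      have e: "ZR L = (\<lambda>x. (x, lzero Q)) ` Z" unfolding ZR_def by (rule Setcompr_eq_image)
      show ?thesis unfolding coset_def e image_image pair_simps(3) by (simp only: image_image)
    qed
    show ?thesis unfolding l0 gen Z_shift[OF t] Z_shift[OF Z_zero] by (rule refl)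
  qed
  show ?thesis using iso ZR cos lamZ by blast
qed

end

context LSA begin
lemma ZR_eq: "ZR L = (\<lambda>x. (x, lzero Q)) ` Z" unfolding ZR_def by (rule Setcompr_eq_image)

lemma part1:
  assumes r: "factor_set L r" and s: "factor_set L s"
    and iso: "lsa_iso (pair_lsa L r) (pair_lsa L s) lam"
    and \<mu>: "lsa_aut Q \<mu>" and \<nu>: "lsa_aut (center L) \<nu>"
    and cos: "\<forall>a\<in>lcar Q. coset (pair_lsa L s) (lam (lzero L, a)) (ZR L)
            = coset (pair_lsa L s) (lzero L, \<mu> a) (ZR L)"
    and lamZ: "\<forall>x\<in>Z. lam (x, lzero Q) = (\<nu> x, lzero Q)"
  shows "\<exists>\<gamma>. even_lin Q (center L) \<gamma> \<and>
            (\<forall>a\<in>lcar Q. \<forall>b\<in>lcar Q.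
               \<nu> (ladd L (r a b) (\<gamma> (lbr Q a b))) = s (\<mu> a) (\<mu> b))"
proof -
  have rZ: "r a b \<in> Z" if "a \<in> lcar Q" "b \<in> lcar Q" for a b
    using r that unfolding factor_set_def Let_def by (simp del: quotZ_simps)
  have laml: "even_lin (pair_lsa L r) (pair_lsa L s) lam"
    and lambr: "\<forall>p\<in>lcar (pair_lsa L r). \<forall>q\<in>lcar (pair_lsa L r). lam (lbr (pair_lsa L r) p q) = lbr (pair_lsa L s) (lam p) (lam q)"
    using iso unfolding lsa_iso_def lsa_hom_def by blast+
  have \<nu>l: "even_lin (center L) (center L) \<nu>" and \<nu>b: "bij_betw \<nu> Z Z"
    using \<nu> unfolding lsa_aut_def lsa_iso_def lsa_hom_def by auto
  have \<nu>Z: "x \<in> Z \<Longrightarrow> \<nu> x \<in> Z" for x using lin_in[OF \<nu>l] by simp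
  have lamP: "p \<in> Z \<times> lcar Q \<Longrightarrow> lam p \<in> Z \<times> lcar Q" for p using lin_in[OF laml, of p] by simp
  define g where "g a = fst (lam (lzero L, a))" for a
  have lam0: "lam (lzero L, a) = (g a, \<mu> a)" if a: "a \<in> lcar Q" for a
  proof -
    define p where "p = lam (lzero L, a)"
    have pP: "p \<in> Z \<times> lcar Q" using lamP a p_def by simp
    have zr: "(lzero L, lzero Q) \<in> ZR L" unfolding ZR_eq by (rule imageI) simp
    have "ladd (pair_lsa L s) p (lzero L, lzero Q) = p"
      using pP Z_car addQ_zero by (cases p) (simp del: quotZ_simps)
    hence "p \<in> coset (pair_lsa L s) p (ZR L)" unfolding coset_def using zr by (metis imageI)
    hence "p \<in> coset (pair_lsa L s) (lzero L, \<mu> a) (ZR L)" using bspec[OF cos a] p_def by (simp only:)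
    then obtain x where "x \<in> Z" "p = ladd (pair_lsa L s) (lzero L, \<mu> a) (x, lzero Q)"
      unfolding coset_def ZR_eq image_image by (elim imageE) (simp only:)
    hence "snd p = ladd Q (\<mu> a) (lzero Q)" by (simp del: quotZ_simps)
    also have "\<dots> = \<mu> a" using addQ_zero lin_in[OF \<mu>[unfolded lsa_aut_def lsa_iso_def lsa_hom_def, THEN conjunct1, THEN conjunct1] a] .
    finally show ?thesis unfolding g_def p_def[symmetric] by (cases p) simp
  qed
  have gZ: "a \<in> lcar Q \<Longrightarrow> g a \<in> Z" for a using lamP[of "(lzero L, a)"] lam0 by simp
  have key: "ladd L (\<nu> (r a b)) (g (lbr Q a b)) = s (\<mu> a) (\<mu> b)" if a: "a \<in> lcar Q" and b: "b \<in> lcar Q" for a b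
  proof -
    have bQ: "lbr Q a b \<in> lcar Q" using brQ_in a b .
    have e1: "lbr (pair_lsa L r) (lzero L, a) (lzero L, b) = ladd (pair_lsa L r) (r a b, lzero Q) (lzero L, lbr Q a b)"
      using rZ[OF a b] Z_car zero_addQ[OF bQ] by (simp del: quotZ_simps)
    have "lam (lbr (pair_lsa L r) (lzero L, a) (lzero L, b)) = ladd (pair_lsa L s) (lam (r a b, lzero Q)) (lam (lzero L, lbr Q a b))"
      unfolding e1 using lin_add[OF laml, of "(r a b, lzero Q)" "(lzero L, lbr Q a b)"] rZ[OF a b] bQ by simp
    also have "\<dots> = (ladd L (\<nu> (r a b)) (g (lbr Q a b)), ladd Q (lzero Q) (\<mu> (lbr Q a b)))"
      using lamZ rZ[OF a b] lam0[OF bQ] by (simp del: quotZ_simps)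
    finally have 1: "fst (lam (lbr (pair_lsa L r) (lzero L, a) (lzero L, b))) = ladd L (\<nu> (r a b)) (g (lbr Q a b))" by simp
    have "lam (lbr (pair_lsa L r) (lzero L, a) (lzero L, b)) = lbr (pair_lsa L s) (g a, \<mu> a) (g b, \<mu> b)"
      using lambr[rule_format, of "(lzero L, a)" "(lzero L, b)"] a b lam0 by (simp del: quotZ_simps)
    hence 2: "fst (lam (lbr (pair_lsa L r) (lzero L, a) (lzero L, b))) = s (\<mu> a) (\<mu> b)" by (simp del: quotZ_simps)
    show ?thesis using 1 2 by simp
  qed
  note inv = inv_facts[OF \<nu>l \<nu>b]
  define \<gamma> where "\<gamma> c = inv_into Z \<nu> (g c)" for c
  have lin: "even_lin Q (center L) \<gamma>"
    unfolding even_lin_def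
  proof (intro conjI ballI allI)
    fix a assume "a \<in> lcar Q" thus "\<gamma> a \<in> lcar (center L)" using inv gZ \<gamma>_def by simp
  next
    fix a b assume a: "a \<in> lcar Q" and b: "b \<in> lcar Q"
    have abQ: "ladd Q a b \<in> lcar Q" using a b rep_mem by simp
    have "lam (ladd (pair_lsa L r) (lzero L, a) (lzero L, b)) = ladd (pair_lsa L s) (lam (lzero L, a)) (lam (lzero L, b))"
      using lin_add[OF laml, of "(lzero L, a)" "(lzero L, b)"] a b by simp
    hence "g (ladd Q a b) = ladd L (g a) (g b)" using lam0 a b abQ by (simp del: quotZ_simps)
    thus "\<gamma> (ladd Q a b) = ladd (center L) (\<gamma> a) (\<gamma> b)" unfolding \<gamma>_def using inv gZ a b by simp
  next
    fix c a assume a: "a \<in> lcar Q"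
    have caQ: "lsmul Q c a \<in> lcar Q" using a rep_mem by simp
    have "lam (lsmul (pair_lsa L r) c (lzero L, a)) = lsmul (pair_lsa L s) c (lam (lzero L, a))"
      using lin_smul[OF laml, of "(lzero L, a)" c] a by simp
    hence "g (lsmul Q c a) = lsmul L c (g a)" using lam0 a caQ by (simp del: quotZ_simps)
    thus "\<gamma> (lsmul Q c a) = lsmul (center L) c (\<gamma> a)" unfolding \<gamma>_def using inv gZ a by simp
  next
    fix i a assume a: "a \<in> lgr Q i"
    have aQ: "a \<in> lcar Q" using a gr_sub by auto
    have "lam (lzero L, a) \<in> lgr (pair_lsa L s) i" using lin_gr[OF laml, of "(lzero L, a)" i] a by (simp del: quotZ_simps)
    hence "g a \<in> lgr L i" "g a \<in> Z" using lam0[OF aQ] by (simp_all del: quotZ_simps)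
    thus "\<gamma> a \<in> lgr (center L) i" unfolding \<gamma>_def using inv by simp
  qed
  have "\<nu> (ladd L (r a b) (\<gamma> (lbr Q a b))) = s (\<mu> a) (\<mu> b)" if a: "a \<in> lcar Q" and b: "b \<in> lcar Q" for a b
  proof -
    have bQ: "lbr Q a b \<in> lcar Q" using brQ_in a b .
    have "\<nu> (ladd L (r a b) (\<gamma> (lbr Q a b))) = ladd L (\<nu> (r a b)) (\<nu> (\<gamma> (lbr Q a b)))"
      using lin_add[OF \<nu>l] rZ[OF a b] inv gZ[OF bQ] \<gamma>_def by simp
    also have "\<nu> (\<gamma> (lbr Q a b)) = g (lbr Q a b)" using inv gZ[OF bQ] \<gamma>_def by simp
    finally show ?thesis using key a b by simp
  qed
  thus ?thesis using lin by blast
qed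

end

theorem lemma3p5:
  fixes L :: "('k::field, 'a) lsa"
    and r s :: "'a set \<Rightarrow> 'a set \<Rightarrow> 'a"
  assumes char2: "(2::'k) \<noteq> 0" and char3: "(3::'k) \<noteq> 0"
    and L: "is_lsa L" and fd: "fin_dim L"
    and r: "factor_set L r" and s: "factor_set L s"
  shows
   "(\<forall>lam \<mu> \<nu>.
       lsa_iso (pair_lsa L r) (pair_lsa L s) lam \<and>
       lam ` ZR L = ZR L \<and>
       lsa_aut (quotZ L) \<mu> \<and> lsa_aut (center L) \<nu> \<and>
       (\<forall>a\<in>lcar (quotZ L).
          coset (pair_lsa L s) (lam (lzero L, a)) (ZR L)
            = coset (pair_lsa L s) (lzero L, \<mu> a) (ZR L)) \<and>
       (\<forall>x\<in>center_set L. lam (x, lzero (quotZ L)) = (\<nu> x, lzero (quotZ L)))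
     \<longrightarrow> (\<exists>\<gamma>. even_lin (quotZ L) (center L) \<gamma> \<and>
            (\<forall>a\<in>lcar (quotZ L). \<forall>b\<in>lcar (quotZ L).
               \<nu> (ladd L (r a b) (\<gamma> (lbr (quotZ L) a b))) = s (\<mu> a) (\<mu> b))))
    \<and>
    (\<forall>\<mu> \<nu> \<delta>.
       lsa_aut (quotZ L) \<mu> \<and> lsa_aut (center L) \<nu> \<and>
       even_lin (quotZ L) (center L) \<delta> \<and>
       (\<forall>a\<in>lcar (quotZ L). \<forall>b\<in>lcar (quotZ L).
          \<nu> (ladd L (r a b) (\<delta> (lbr (quotZ L) a b))) = s (\<mu> a) (\<mu> b))
     \<longrightarrow> (\<exists>lam. lsa_iso (pair_lsa L r) (pair_lsa L s) lam \<and>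
            lam ` ZR L = ZR L \<and>
            (\<forall>a\<in>lcar (quotZ L).
               coset (pair_lsa L s) (lam (lzero L, a)) (ZR L)
                 = coset (pair_lsa L s) (lzero L, \<mu> a) (ZR L)) \<and>
            (\<forall>x\<in>center_set L. lam (x, lzero (quotZ L)) = (\<nu> x, lzero (quotZ L)))))"
proof -
  interpret LSA L using L by unfold_locales
  show ?thesis
  proof (intro conjI allI impI)
    fix lam \<mu> \<nu>
    assume h: "lsa_iso (pair_lsa L r) (pair_lsa L s) lam \<and>
       lam ` ZR L = ZR L \<and>
       lsa_aut (quotZ L) \<mu> \<and> lsa_aut (center L) \<nu> \<and>
       (\<forall>a\<in>lcar (quotZ L).
          coset (pair_lsa L s) (lam (lzero L, a)) (ZR L)
            = coset (pair_lsa L s) (lzero L, \<mu> a) (ZR L)) \<and>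
       (\<forall>x\<in>center_set L. lam (x, lzero (quotZ L)) = (\<nu> x, lzero (quotZ L)))"
    from h show "\<exists>\<gamma>. even_lin (quotZ L) (center L) \<gamma> \<and>
            (\<forall>a\<in>lcar (quotZ L). \<forall>b\<in>lcar (quotZ L).
               \<nu> (ladd L (r a b) (\<gamma> (lbr (quotZ L) a b))) = s (\<mu> a) (\<mu> b))"
      by (elim conjE) (rule part1[OF r s]; assumption)
  next
    fix \<mu> \<nu> \<delta>
    assume h: "lsa_aut (quotZ L) \<mu> \<and> lsa_aut (center L) \<nu> \<and>
       even_lin (quotZ L) (center L) \<delta> \<and>
       (\<forall>a\<in>lcar (quotZ L). \<forall>b\<in>lcar (quotZ L).
          \<nu> (ladd L (r a b) (\<delta> (lbr (quotZ L) a b))) = s (\<mu> a) (\<mu> b))"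
    from h show "\<exists>lam. lsa_iso (pair_lsa L r) (pair_lsa L s) lam \<and>
            lam ` ZR L = ZR L \<and>
            (\<forall>a\<in>lcar (quotZ L).
               coset (pair_lsa L s) (lam (lzero L, a)) (ZR L)
                 = coset (pair_lsa L s) (lzero L, \<mu> a) (ZR L)) \<and>
            (\<forall>x\<in>center_set L. lam (x, lzero (quotZ L)) = (\<nu> x, lzero (quotZ L)))"
      by (elim conjE) (rule part2[OF r]; assumption)
  qed
qed

end
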